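(* Let $n,k$ be positive integers with $n>2k$, and let $\sigma\in S_n$ be a permutation all of whose cycles have length exceeding $k$. Then the subgroups $S_{n-k}$ and $\langle\sigma\rangle$ invariably generate $S_n$.
   Context: $S_{n-k}$ is viewed as the subgroup of $S_n$ of permutations of $\{1,\dots,n-k\}$ fixing each element of $\{n-k+1,\dots,n\}$. Subgroups $\{H_i\}_{i\in I}$ of a group $H$ invariably generate $H$ if for every choice of elements $\{\sigma_i\}_{i\in I}$ of $H$, the conjugates $\{\sigma_i^{-1}H_i\sigma_i\}_{i\in I}$ generate $H$. *)

theory Defs
  imports "HOL-Algebra.Sym_Groups" "HOL-Combinatorics.Orbits"
begin

definition invariably_generate :: "('a, 'b) monoid_scheme \<Rightarrow> 'i set \<Rightarrow> ('i \<Rightarrow> 'a set) \<Rightarrow> bool" where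
  "invariably_generate G I H \<longleftrightarrow>
     (\<forall>g \<in> Pi I (\<lambda>_. carrier G).
        generate G (\<Union>i\<in>I. (\<lambda>h. inv\<^bsub>G\<^esub> (g i) \<otimes>\<^bsub>G\<^esub> h \<otimes>\<^bsub>G\<^esub> g i) ` H i) = carrier G)"

end

theory Submission
  imports Defs
begin

lemma conj_transpose:
  assumes "bij f"
  shows "inv' f \<circ> Transposition.transpose a b \<circ> f = Transposition.transpose (inv' f a) (inv' f b)"
proof -
  have "inv' f \<circ> Transposition.transpose a b \<circ> f = inv' f \<circ> (f \<circ> Transposition.transpose (inv' f a) (inv' f b))"
    using transpose_comp_eq[OF assms] by (simp add: comp_assoc)
  also have "\<dots> = Transposition.transpose (inv' f a) (inv' f b)"
    using assms by (simp add: comp_assoc[symmetric] bij_is_inj)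
  finally show ?thesis .
qed

lemma core:
  assumes H: "subgroup H (sym_group n)"
    and A: "A \<subseteq> {1..n}" "n < 2 * card A"
    and tr: "\<And>a b. a \<in> A \<Longrightarrow> b \<in> A \<Longrightarrow> Transposition.transpose a b \<in> H"
    and mv: "\<And>x. x \<in> {1..n} \<Longrightarrow> \<exists>h\<in>H. h x \<in> A"
  shows "carrier (sym_group n) \<subseteq> H"
proof -
  interpret G: group "sym_group n" by (rule sym_group_is_group)
  have Hc: "h \<in> H \<Longrightarrow> h permutes {1..n}" for h
    using subgroup.subset[OF H] sym_group_carrier by blast
  have Hinv: "h \<in> H \<Longrightarrow> inv' h \<in> H" for h
    using subgroup.m_inv_closed[OF H] subgroup.subset[OF H] sym_group_inv_equality by fastforce
  have Hmul: "h \<in> H \<Longrightarrow> h' \<in> H \<Longrightarrow> h \<circ> h' \<in> H" for h h'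
    using subgroup.m_closed[OF H] by (simp add: sym_group_mult)
  have Hid: "id \<in> H"
    using subgroup.one_closed[OF H] by (simp add: sym_group_one)
  define cls where "cls x = {y\<in>{1..n}. Transposition.transpose x y \<in> H}" for x
  have big: "card A \<le> card (cls x)" if x: "x \<in> {1..n}" for x
  proof -
    obtain h where h: "h \<in> H" "h x \<in> A" using mv[OF x] by blast
    have hp: "h permutes {1..n}" using Hc[OF h(1)] .
    have "inv' h ` A \<subseteq> cls x"
    proof
      fix y assume "y \<in> inv' h ` A"
      then obtain a where a: "a \<in> A" "y = inv' h a" by blast
      have hb: "bij h" using hp permutes_bij by blast
      have "inv' h \<circ> Transposition.transpose (h x) a \<circ> h \<in> H"
        using Hmul Hinv h tr[OF h(2) a(1)] by blast
      moreover have "inv' h \<circ> Transposition.transpose (h x) a \<circ> h = Transposition.transpose x y"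
        unfolding conj_transpose[OF hb] a(2) using permutes_inverses(2)[OF hp] by simp
      ultimately have "Transposition.transpose x y \<in> H" by simp
      moreover have "y \<in> {1..n}"
        using a A(1) permutes_in_image[OF permutes_inv[OF hp]] by auto
      ultimately show "y \<in> cls x" unfolding cls_def by blast
    qed
    moreover have "inj_on (inv' h) A"
      using permutes_inj[OF permutes_inv[OF hp]] by (meson inj_on_subset subset_UNIV)
    ultimately show ?thesis
      using card_inj_on_le[of "inv' h" A "cls x"] unfolding cls_def by auto
  qed
  have alltr: "Transposition.transpose x y \<in> H" if x: "x \<in> {1..n}" and y: "y \<in> {1..n}" for x y
  proof -
    have "cls x \<inter> cls y \<noteq> {}"
    proof
      assume e: "cls x \<inter> cls y = {}"
      have "card (cls x \<union> cls y) = card (cls x) + card (cls y)"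
        using e by (intro card_Un_disjoint) (auto simp: cls_def)
      moreover have "card (cls x \<union> cls y) \<le> n"
      proof -
        have "cls x \<union> cls y \<subseteq> {1..n}" by (auto simp: cls_def)
        then show ?thesis using card_mono[of "{1..n}" "cls x \<union> cls y"] by simp
      qed
      ultimately show False using big[OF x] big[OF y] A(2) by linarith
    qed
    then obtain z where z: "Transposition.transpose x z \<in> H" "Transposition.transpose y z \<in> H"
      unfolding cls_def by blast
    show ?thesis
    proof (cases "z = y \<or> x = y")
      case True then show ?thesis using z Hid by auto
    next
      case False
      hence "Transposition.transpose x z \<circ> Transposition.transpose z y \<circ> Transposition.transpose x z
              = Transposition.transpose x y"
        by (intro transpose_comp_triple) auto
      moreover have "Transposition.transpose z y = Transposition.transpose y z"
        by (simp add: transpose_commute)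
      ultimately show ?thesis using Hmul z by metis
    qed
  qed
  show ?thesis
  proof
    fix p assume "p \<in> carrier (sym_group n)"
    hence "p permutes {1..n}" by (simp add: sym_group_carrier)
    moreover have "finite {1..n}" by simp
    ultimately show "p \<in> H"
    proof (induction rule: permutes_induct)
      case id show ?case by (rule Hid)
    next
      case (swap a b p) then show ?case using Hmul alltr by blast
    qed
  qed
qed

theorem proposition3p5:
  fixes n k :: nat and \<sigma> :: "nat \<Rightarrow> nat"
  assumes "0 < k" and "0 < n" and "n > 2 * k"
    and "\<sigma> \<in> carrier (sym_group n)"
    and "\<forall>x\<in>{1..n}. card (orbit \<sigma> x) > k"
  shows "invariably_generate (sym_group n) (UNIV :: bool set)
           (\<lambda>b. if b then carrier (sym_group (n - k)) else generate (sym_group n) {\<sigma>})"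
  unfolding invariably_generate_def
proof
  fix g assume g: "g \<in> Pi (UNIV :: bool set) (\<lambda>_. carrier (sym_group n))"
  interpret G: group "sym_group n" by (rule sym_group_is_group)
  define g1 where "g1 = g True"
  define g2 where "g2 = g False"
  have g1c: "g1 \<in> carrier (sym_group n)" and g2c: "g2 \<in> carrier (sym_group n)"
    using g unfolding g1_def g2_def by auto
  have g1p: "g1 permutes {1..n}" and g2p: "g2 permutes {1..n}"
    using g1c g2c sym_group_carrier by auto
  have sp: "\<sigma> permutes {1..n}" using assms(4) sym_group_carrier by auto
  have conj: "inv\<^bsub>sym_group n\<^esub> f \<otimes>\<^bsub>sym_group n\<^esub> h \<otimes>\<^bsub>sym_group n\<^esub> f = inv' f \<circ> h \<circ> f"
    if "f \<in> carrier (sym_group n)" for f h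
    using that by (simp add: sym_group_mult)
  define U where "U = (\<Union>i\<in>(UNIV :: bool set). (\<lambda>h. inv\<^bsub>sym_group n\<^esub> (g i) \<otimes>\<^bsub>sym_group n\<^esub> h \<otimes>\<^bsub>sym_group n\<^esub> g i) `
      (if i then carrier (sym_group (n - k)) else generate (sym_group n) {\<sigma>}))"
  have Sk: "carrier (sym_group (n - k)) \<subseteq> carrier (sym_group n)"
  proof
    fix p assume "p \<in> carrier (sym_group (n - k))"
    hence "p permutes {1..n-k}" by (simp add: sym_group_carrier)
    hence "p permutes {1..n}" by (rule permutes_subset) auto
    then show "p \<in> carrier (sym_group n)" by (simp add: sym_group_carrier)
  qed
  have Sg: "generate (sym_group n) {\<sigma>} \<subseteq> carrier (sym_group n)"
    using G.generate_in_carrier assms(4) by blast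
  have Ueq: "U = (\<lambda>h. inv' g1 \<circ> h \<circ> g1) ` carrier (sym_group (n - k))
      \<union> (\<lambda>h. inv' g2 \<circ> h \<circ> g2) ` generate (sym_group n) {\<sigma>}"
    unfolding U_def UNIV_bool using conj[OF g1c] conj[OF g2c] by (simp add: g1_def g2_def Un_commute)
  have cc: "inv' f \<circ> h \<circ> f \<in> carrier (sym_group n)"
    if "f \<in> carrier (sym_group n)" "h \<in> carrier (sym_group n)" for f h
    using G.m_closed[OF G.m_closed[OF G.inv_closed[OF that(1)] that(2)] that(1)] conj[OF that(1)] by simp
  have Uc: "U \<subseteq> carrier (sym_group n)"
  proof -
    have "(\<lambda>h. inv' g1 \<circ> h \<circ> g1) ` carrier (sym_group (n - k)) \<subseteq> carrier (sym_group n)"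
      using cc[OF g1c] Sk by auto
    moreover have "(\<lambda>h. inv' g2 \<circ> h \<circ> g2) ` generate (sym_group n) {\<sigma>} \<subseteq> carrier (sym_group n)"
      using cc[OF g2c] Sg by auto
    ultimately show ?thesis unfolding Ueq by (rule Un_least)
  qed
  define H where "H = generate (sym_group n) U"
  have Hs: "subgroup H (sym_group n)" unfolding H_def using G.generate_is_subgroup[OF Uc] .
  have UH: "U \<subseteq> H" unfolding H_def by (blast intro: generate.incl)
  have HS: "H \<subseteq> carrier (sym_group n)" using subgroup.subset[OF Hs] .
  define A where "A = inv' g1 ` {1..n-k}"
  have ig1: "inv' g1 permutes {1..n}" using permutes_inv[OF g1p] .
  have ig2: "inv' g2 permutes {1..n}" using permutes_inv[OF g2p] .
  have AS: "A \<subseteq> {1..n}" unfolding A_def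
  proof (rule image_subsetI)
    fix i assume "i \<in> {1..n-k}"
    hence "i \<in> {1..n}" by (meson atLeastAtMost_iff diff_le_self order_trans)
    thus "inv' g1 i \<in> {1..n}" by (simp only: permutes_in_image[OF ig1])
  qed
  have "inj_on (inv' g1) {1..n-k}" using permutes_inj[OF ig1] by (meson inj_on_subset subset_UNIV)
  hence cardA: "card A = n - k" unfolding A_def by (simp add: card_image)
  have "carrier (sym_group n) \<subseteq> H"
  proof (rule core[OF Hs AS])
    show "n < 2 * card A" using cardA assms(3) by linarith
  next
    fix a b assume "a \<in> A" "b \<in> A"
    then obtain i j where ij: "i \<in> {1..n-k}" "j \<in> {1..n-k}" "a = inv' g1 i" "b = inv' g1 j"
      unfolding A_def by blast
    have "Transposition.transpose i j \<in> carrier (sym_group (n - k))"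
      using ij by (simp add: sym_group_carrier permutes_swap_id)
    hence "inv' g1 \<circ> Transposition.transpose i j \<circ> g1 \<in> U"
      unfolding Ueq by blast
    moreover have "inv' g1 \<circ> Transposition.transpose i j \<circ> g1 = Transposition.transpose a b"
      using conj_transpose[of g1 i j] permutes_bij[OF g1p] ij by simp
    ultimately show "Transposition.transpose a b \<in> H" using UH by auto
  next
    fix x assume x: "x \<in> {1..n}"
    define y where "y = g2 x"
    have y: "y \<in> {1..n}" unfolding y_def using x by (simp only: permutes_in_image[OF g2p])
    define C where "C = g2 ` A"
    have CS: "C \<subseteq> {1..n}" unfolding C_def
    proof (rule image_subsetI)
      fix i assume "i \<in> A"
      hence "i \<in> {1..n}" using AS by blast
      thus "g2 i \<in> {1..n}" by (simp only: permutes_in_image[OF g2p])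
    qed
    have "inj_on g2 A" using permutes_inj[OF g2p] by (meson inj_on_subset subset_UNIV)
    hence cardC: "card C = n - k" unfolding C_def using cardA by (simp add: card_image)
    have oS: "orbit \<sigma> y \<subseteq> {1..n}" using permutes_orbit_subset[OF sp y] .
    have "orbit \<sigma> y \<inter> C \<noteq> {}"
    proof
      assume e: "orbit \<sigma> y \<inter> C = {}"
      hence "orbit \<sigma> y \<subseteq> {1..n} - C" using oS by blast
      hence "card (orbit \<sigma> y) \<le> card ({1..n} - C)" by (intro card_mono) auto
      also have "\<dots> = n - (n - k)" using card_Diff_subset[OF finite_subset[OF CS] CS] cardC by simp
      also have "n - (n - k) = k" using assms(3) by linarith
      finally have "card (orbit \<sigma> y) \<le> k" .
      moreover have "k < card (orbit \<sigma> y)" using assms(5) y by blast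
      ultimately show False by linarith
    qed
    moreover have "permutation \<sigma>" using sym_group_carrier'[OF assms(4)] .
    ultimately have "\<exists>m. (\<sigma> ^^ m) y \<in> C"
      unfolding orbit_altdef_permutation[OF \<open>permutation \<sigma>\<close>] by blast
    then obtain m where m: "(\<sigma> ^^ m) y \<in> C" by blast
    define \<tau> where "\<tau> = inv' g2 \<circ> \<sigma> \<circ> g2"
    have "\<sigma> \<in> generate (sym_group n) {\<sigma>}" by (rule generate.incl) simp
    hence "\<tau> \<in> U" unfolding Ueq \<tau>_def by blast
    hence tH: "\<tau> \<in> H" using UH by auto
    have powH: "\<tau> ^^ m' \<in> H" for m'
    proof (induction m')
      case 0 show ?case using subgroup.one_closed[OF Hs] by (simp add: sym_group_one id_def)
    next
      case (Suc m') then show ?case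
        using subgroup.m_closed[OF Hs tH Suc] by (simp add: sym_group_mult del: comp_apply)
    qed
    have powE: "(\<tau> ^^ m') z = inv' g2 ((\<sigma> ^^ m') (g2 z))" for m' z
    proof (induction m')
      case 0 show ?case by (simp add: permutes_inverses[OF g2p])
    next
      case (Suc m') then show ?case
        by (simp add: \<tau>_def permutes_inverses[OF g2p])
    qed
    have "(\<tau> ^^ m) x \<in> A"
      using m unfolding powE C_def y_def using permutes_inverses(2)[OF g2p] by auto
    then show "\<exists>h\<in>H. h x \<in> A" using powH by blast
  qed
  moreover have "H \<subseteq> carrier (sym_group n)" using HS .
  ultimately show "generate (sym_group n) (\<Union>i\<in>(UNIV :: bool set). (\<lambda>h. inv\<^bsub>sym_group n\<^esub> (g i) \<otimes>\<^bsub>sym_group n\<^esub> h \<otimes>\<^bsub>sym_group n\<^esub> g i) `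
      (if i then carrier (sym_group (n - k)) else generate (sym_group n) {\<sigma>})) = carrier (sym_group n)"
    unfolding H_def U_def by blast
qed

end
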